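(* Let $P$ be a finite lattice. The image of the characteristic map $\chi\colon \mathrm{Tr}(P)\to \mathrm{End}(P)$, $R\mapsto\chi^R$, is exactly the set $\mathrm{End}^\circ(P)$ of interior operators on $P$.
   Context: For a finite lattice $(P,\le)$, a transfer system on $P$ is a partial order $R$ on $P$ refining $\le$ (i.e. $x\,R\,y\Rightarrow x\le y$) that is closed under restriction: if $x\,R\,z$ and $y\le z$ then $(x\wedge y)\,R\,y$. $\mathrm{Tr}(P)$ is the set of transfer systems on $P$ ordered by inclusion of relations. For $R\in\mathrm{Tr}(P)$ and $x\in P$, the set $\{y\in P: y\,R\,x\}$ has a least element, and the characteristic function $\chi^R\colon P\to P$ sends $x$ to this least element. $\mathrm{End}(P)$ is the set of monotone maps $P\to P$ with the pointwise order. An interior operator is a monotone $f\colon P\to P$ with $f(x)\le x$ and $f(f(x))=f(x)$ for all $x$; $\mathrm{End}^\circ(P)\subseteq\mathrm{End}(P)$ is the set of interior operators. *)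

theory Defs
  imports Main
begin

definition transfer_system :: "('a::{finite,lattice}) rel \<Rightarrow> bool" where
  "transfer_system R \<longleftrightarrow>
     refl R \<and> antisym R \<and> trans R \<and>
     (\<forall>x y. (x, y) \<in> R \<longrightarrow> x \<le> y) \<and>
     (\<forall>x y z. (x, z) \<in> R \<and> y \<le> z \<longrightarrow> (inf x y, y) \<in> R)"

definition Tr :: "('a::{finite,lattice}) rel set" where
  "Tr = {R. transfer_system R}"

definition chi :: "('a::{finite,lattice}) rel \<Rightarrow> 'a \<Rightarrow> 'a" where
  "chi R x = (THE m. (m, x) \<in> R \<and> (\<forall>y. (y, x) \<in> R \<longrightarrow> m \<le> y))"

definition End_maps :: "(('a::{finite,lattice}) \<Rightarrow> 'a) set" where
  "End_maps = {f. mono f}"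

definition interior_operator :: "(('a::{finite,lattice}) \<Rightarrow> 'a) \<Rightarrow> bool" where
  "interior_operator f \<longleftrightarrow> mono f \<and> (\<forall>x. f x \<le> x) \<and> (\<forall>x. f (f x) = f x)"

definition End_interior :: "(('a::{finite,lattice}) \<Rightarrow> 'a) set" where
  "End_interior = {f. interior_operator f}"

end

theory Submission
  imports Defs
begin

lemma ts_least:
  fixes R :: "('a::{finite,lattice}) rel"
  assumes "transfer_system R"
  shows "\<exists>m. (m, x) \<in> R \<and> (\<forall>y. (y, x) \<in> R \<longrightarrow> m \<le> y)"
proof -
  have rf: "(x,x) \<in> R" using assms unfolding transfer_system_def refl_on_def by auto
  obtain m where m: "m \<in> {y. (y,x) \<in> R}" "\<forall>b \<in> {y. (y,x) \<in> R}. b \<le> m \<longrightarrow> m = b"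
    using finite_has_minimal[of "{y. (y,x) \<in> R}"] rf by auto
  have "m \<le> y" if y: "(y,x) \<in> R" for y
  proof -
    have "(inf y m, m) \<in> R" using assms y m(1) unfolding transfer_system_def
      by (metis mem_Collect_eq order_refl) 
    have le: "m \<le> x" using assms m(1) unfolding transfer_system_def by auto
    have "(inf y m, m) \<in> R" using assms y unfolding transfer_system_def
      using le by blast
    then have "(inf y m, x) \<in> R" using m(1) assms unfolding transfer_system_def trans_def by blast
    then have "m = inf y m" using m(2) by auto
    then show ?thesis by (metis inf.cobounded1)
  qed
  then show ?thesis using m(1) by auto
qed

lemma chi_char:
  fixes R :: "('a::{finite,lattice}) rel"
  assumes "transfer_system R" "(m, x) \<in> R" "\<forall>y. (y, x) \<in> R \<longrightarrow> m \<le> y"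
  shows "chi R x = m"
  unfolding chi_def
  by (rule the_equality, use assms in auto) (meson assms(2,3) order_antisym)

lemma chi_prop:
  fixes R :: "('a::{finite,lattice}) rel"
  assumes "transfer_system R"
  shows "(chi R x, x) \<in> R \<and> (\<forall>y. (y, x) \<in> R \<longrightarrow> chi R x \<le> y)"
  using ts_least[OF assms, of x] chi_char[OF assms] by metis

theorem theorem2p7:
  shows "chi ` (Tr :: ('a::{finite,lattice}) rel set) = End_interior"
proof
  show "chi ` (Tr :: 'a rel set) \<subseteq> End_interior"
  proof
    fix f assume "f \<in> chi ` (Tr :: 'a rel set)"
    then obtain R :: "'a rel" where R: "transfer_system R" and f: "f = chi R"
      unfolding Tr_def by auto
    note P = chi_prop[OF R]
    have refl: "\<And>x. (x,x) \<in> R" using R unfolding transfer_system_def refl_on_def by auto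
    have tr: "\<And>x y z. (x,y) \<in> R \<Longrightarrow> (y,z) \<in> R \<Longrightarrow> (x,z) \<in> R"
      using R unfolding transfer_system_def trans_def by blast
    have le: "\<And>x y. (x,y) \<in> R \<Longrightarrow> x \<le> y" using R unfolding transfer_system_def by blast
    have rs: "\<And>x y z. (x,z) \<in> R \<Longrightarrow> y \<le> z \<Longrightarrow> (inf x y, y) \<in> R"
      using R unfolding transfer_system_def by blast
    have a: "chi R x \<le> x" for x using P le by blast
    have b: "chi R (chi R x) = chi R x" for x
      by (rule chi_char[OF R]) (use P refl tr in blast)+
    have c: "chi R x \<le> chi R x'" if "x \<le> x'" for x x'
    proof -
      have "(inf (chi R x') x, x) \<in> R" using rs P that by blast
      then have "chi R x \<le> inf (chi R x') x" using P by blast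
      then show ?thesis using le_infE by blast
    qed
    show "f \<in> End_interior" unfolding End_interior_def interior_operator_def f
      using a b c by (auto intro: monoI)
  qed
next
  show "End_interior \<subseteq> chi ` (Tr :: 'a rel set)"
  proof
    fix f :: "'a \<Rightarrow> 'a" assume "f \<in> End_interior"
    then have m: "mono f" and d: "\<And>x. f x \<le> x" and i: "\<And>x. f (f x) = f x"
      unfolding End_interior_def interior_operator_def by auto
    define R where "R = {(x,y). x \<le> y \<and> f y \<le> x}"
    have R: "transfer_system R" unfolding transfer_system_def
    proof (intro conjI allI impI)
      show "refl R" unfolding R_def refl_on_def using d by auto
      show "antisym R" unfolding R_def antisym_def by auto
      show "trans R" unfolding R_def trans_def
      proof (clarify)
        fix x y z assume "x \<le> y" "f y \<le> x" "y \<le> z" "f z \<le> y"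
        have "f z = f (f z)" using i by simp
        also have "\<dots> \<le> f y" using m \<open>f z \<le> y\<close> by (rule monoD)
        finally show "x \<le> z \<and> f z \<le> x" using \<open>x \<le> y\<close> \<open>y \<le> z\<close> \<open>f y \<le> x\<close> by auto
      qed
      show "\<And>x y. (x,y) \<in> R \<Longrightarrow> x \<le> y" unfolding R_def by auto
      fix x y z assume "(x, z) \<in> R \<and> y \<le> z"
      then have "f z \<le> x" "y \<le> z" unfolding R_def by auto
      moreover have "f y \<le> f z" using m \<open>y \<le> z\<close> by (rule monoD)
      ultimately show "(inf x y, y) \<in> R" unfolding R_def using d[of y] by auto
    qed
    have "chi R = f"
    proof
      fix x show "chi R x = f x"
        by (rule chi_char[OF R]) (auto simp: R_def d)
    qed
    then show "f \<in> chi ` Tr" using R unfolding Tr_def by auto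
  qed
qed

end
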